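(* Let $\sigma(\boldsymbol\epsilon)$ be the (complex form) covariance matrix of a family of $N$-mode Gaussian states depending differentiably on $\boldsymbol\epsilon$, let $A=K\sigma$, and let $\lambda_{\min}$ be the smallest symplectic eigenvalue of $\sigma$, assumed to satisfy $\lambda_{\min}>1$. For an integer $M\ge 0$ define the remainder $R_M^{ij}=\frac12\sum_{n=M+1}^\infty\operatorname{tr}\big[A^{-n}\partial_iA\,A^{-n}\partial_jA\big]$. Then \[ |R_M^{ij}|\le\frac{\sqrt{\operatorname{tr}[(A\partial_iA)^2]}\,\sqrt{\operatorname{tr}[(A\partial_jA)^2]}}{2\lambda_{\min}^{2(M+1)}(\lambda_{\min}^2-1)}. \]
   Context: Bosonic system with $N$ modes; $\hat{\mathbf A}=(\hat a_1,\dots,\hat a_N,\hat a_1^\dagger,\dots,\hat a_N^\dagger)^T$; $K=\begin{bmatrix}I&0\\0&-I\end{bmatrix}$. For a Gaussian state $\hat\rho$, $\boldsymbol d^m=\operatorname{tr}[\hat\rho\hat{\mathbf A}^m]$, $\Delta\hat{\mathbf A}=\hat{\mathbf A}-\boldsymbol d$, $\sigma^{mn}=\operatorname{tr}[\hat\rho\{\Delta\hat{\mathbf A}^m,(\Delta\hat{\mathbf A}^n)^\dagger\}]$. Symplectic eigenvalues are the positive eigenvalues of $K\sigma$. $\partial_i=\partial/\partial\epsilon_i$. *)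

theory Defs
  imports "HOL-Analysis.Analysis"
begin

text \<open>The N modes are indexed by a finite type 'n; the 2N components of
  the vector (a_1..a_N, a_1^dagger..a_N^dagger) are indexed by 'n + 'n,
  Inl k standing for a_k and Inr k for a_k^dagger.\<close>

type_synonym ('n) cmat = "complex ^ ('n + 'n) ^ ('n + 'n)"

definition Kmat :: "('n::finite) cmat" where
  "Kmat = (\<chi> r c. if r = c then (case r of Inl _ \<Rightarrow> 1 | Inr _ \<Rightarrow> -1) else 0)"

definition adj :: "complex ^ 'm ^ 'k \<Rightarrow> complex ^ 'k ^ 'm" where
  "adj A = (\<chi> r c. cnj (A $ c $ r))"

fun mpow :: "('a::semiring_1) ^ 'm ^ 'm \<Rightarrow> nat \<Rightarrow> 'a ^ 'm ^ 'm" where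
  "mpow A 0 = mat 1"
| "mpow A (Suc n) = A ** mpow A n"

text \<open>Block structure [[a, b], [conj b, conj a]] of matrices in the complex form.\<close>
definition complex_form_block :: "('n::finite) cmat \<Rightarrow> bool" where
  "complex_form_block S \<longleftrightarrow>
     (\<forall>k l. S $ Inr k $ Inr l = cnj (S $ Inl k $ Inl l) \<and>
            S $ Inr k $ Inl l = cnj (S $ Inl k $ Inr l))"

definition symplectic_c :: "('n::finite) cmat \<Rightarrow> bool" where
  "symplectic_c S \<longleftrightarrow> complex_form_block S \<and> S ** Kmat ** adj S = Kmat"

definition diagLL :: "('n::finite \<Rightarrow> real) \<Rightarrow> 'n cmat" where
  "diagLL L = (\<chi> r c. if r = c then complex_of_real (case r of Inl k \<Rightarrow> L k | Inr k \<Rightarrow> L k) else 0)"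

text \<open>Covariance matrix of a Gaussian state (via the Williamson decomposition
  sigma = S diag(L,L) S^dagger, S symplectic, symplectic eigenvalues L_k \<ge> 1).\<close>
definition gaussian_cov :: "('n::finite) cmat \<Rightarrow> bool" where
  "gaussian_cov \<sigma> \<longleftrightarrow>
     (\<exists>S L. symplectic_c S \<and> (\<forall>k. L k \<ge> 1) \<and> \<sigma> = S ** diagLL L ** adj S)"

definition sympl_eigs :: "('n::finite) cmat \<Rightarrow> real set" where
  "sympl_eigs \<sigma> = {l. l > 0 \<and> (\<exists>v. v \<noteq> 0 \<and> (Kmat ** \<sigma>) *v v = complex_of_real l *s v)}"

definition min_sympl_eig :: "('n::finite) cmat \<Rightarrow> real" where
  "min_sympl_eig \<sigma> = Min (sympl_eigs \<sigma>)"

definition pderiv_i :: "(real ^ 'p \<Rightarrow> ('n::finite) cmat) \<Rightarrow> real ^ 'p \<Rightarrow> 'p \<Rightarrow> 'n cmat" where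
  "pderiv_i \<sigma> x i = frechet_derivative \<sigma> (at x) (axis i 1)"

end

theory Submission
  imports Defs
begin

definition dg :: "('m::finite \<Rightarrow> 'a::semiring_1) \<Rightarrow> 'a^'m^'m" where
  "dg f = (\<chi> r c. if r = c then f r else 0)"

lemma dg_mult_left: "(dg f ** M) $ r $ c = f r * M $ r $ c"
proof -
  have "(dg f ** M) $ r $ c = (\<Sum>k\<in>UNIV. (if r = k then f r * M $ k $ c else 0))"
    unfolding matrix_matrix_mult_def dg_def by (simp add: if_distrib if_distribR cong: if_cong)
  also have "\<dots> = f r * M $ r $ c" by simp
  finally show ?thesis .
qed

lemma dg_mult_right: "((M::'a::comm_semiring_1^'m^'m) ** dg f) $ r $ c = M $ r $ c * f c"
  by (simp add: matrix_matrix_mult_def dg_def if_distrib cong: if_cong)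

lemma dg_dg: "dg f ** dg g = dg (\<lambda>a. f a * g a)"
  by (simp add: vec_eq_iff dg_mult_left) (simp add: dg_def)

lemma mat1_dg: "mat 1 = dg (\<lambda>_. 1)"
  by (simp add: mat_def dg_def)

lemma mpow_dg: "mpow (dg f) n = dg (\<lambda>a. f a ^ n)"
  by (induction n) (simp_all add: mat1_dg dg_dg)

lemma adj_mult: "adj (A ** B) = adj B ** (adj A :: complex^_^_)"
  by (simp add: vec_eq_iff adj_def matrix_matrix_mult_def mult.commute)

lemma adj_adj[simp]: "adj (adj A) = A"
  by (simp add: vec_eq_iff adj_def)

lemma adj_dg: "adj (dg f) = dg (\<lambda>a. cnj (f a))"
  by (simp add: vec_eq_iff adj_def dg_def)

lemma adj_mat1: "adj (mat 1 :: complex^'m^'m) = mat 1"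
  by (simp add: vec_eq_iff adj_def mat_def)

lemma trace_dg: "trace (dg e ** P ** dg e ** (Q::complex^'m^'m)) =
   (\<Sum>a\<in>UNIV. \<Sum>b\<in>UNIV. e a * P$a$b * e b * Q$b$a)"
proof -
  have X: "(dg e ** P ** dg e) $ a $ b = e a * P$a$b * e b" for a b
    by (simp add: dg_mult_left dg_mult_right)
  have T: "trace (Y ** Q) = (\<Sum>a\<in>UNIV. \<Sum>b\<in>UNIV. Y$a$b * Q$b$a)" for Y :: "complex^'m^'m"
    by (simp add: trace_def matrix_matrix_mult_def)
  show ?thesis
    unfolding T X ..
qed

lemma matrix_inv_eq:
  fixes A B :: "'a::field^'m^'m"
  assumes "A ** B = mat 1" shows "matrix_inv A = B"
proof -
  have BA: "B ** A = mat 1" using assms matrix_left_right_inverse by blast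
  have ex: "\<exists>A'. A ** A' = mat 1 \<and> A' ** A = mat 1" using assms BA by blast
  define C where "C = matrix_inv A"
  have C: "A ** C = mat 1 \<and> C ** A = mat 1" unfolding C_def matrix_inv_def using someI_ex[OF ex] .
  have "C = C ** (A ** B)" using assms by simp
  also have "\<dots> = B" by (simp add: matrix_mul_assoc C)
  finally show ?thesis unfolding C_def .
qed

lemma geom_pair:
  fixes r :: real and z :: complex
  assumes "\<bar>r\<bar> < 1"
  shows "(\<lambda>k. complex_of_real (r^(k+M+1)) * z) sums (z * complex_of_real (r^(M+1) / (1 - r)))"
proof -
  have n: "norm (complex_of_real r) < 1" using assms by simp
  have "(\<lambda>k. (z * complex_of_real (r^(M+1))) * (complex_of_real r)^k) sums
        ((z * complex_of_real (r^(M+1))) * (1 / (1 - complex_of_real r)))"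
    by (rule sums_mult[OF geometric_sums[OF n]])
  moreover have "(\<lambda>k. (z * complex_of_real (r^(M+1))) * (complex_of_real r)^k) =
       (\<lambda>k. complex_of_real (r^(k+M+1)) * z)"
    by (simp add: power_add mult_ac)
  moreover have "(z * complex_of_real (r^(M+1))) * (1 / (1 - complex_of_real r)) =
      z * complex_of_real (r^(M+1) / (1 - r))"
    by simp
  ultimately show ?thesis by simp
qed

lemma geom_norm:
  fixes r :: real and z :: complex
  assumes "\<bar>r\<bar> < 1"
  shows "cmod (z * complex_of_real (r^(M+1) / (1 - r))) \<le> cmod z * (\<bar>r\<bar>^(M+1) / (1 - \<bar>r\<bar>))"
proof -
  have "cmod (z * complex_of_real (r^(M+1) / (1 - r))) = cmod z * (\<bar>r\<bar>^(M+1) / \<bar>1 - r\<bar>)"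
    by (simp only: norm_mult norm_of_real abs_divide power_abs)
  also have "\<dots> \<le> cmod z * (\<bar>r\<bar>^(M+1) / (1 - \<bar>r\<bar>))"
    using assms by (intro mult_left_mono divide_left_mono) (auto simp: mult_pos_pos)
  finally show ?thesis .
qed

lemma pair_ineq:
  fixes t mu :: real
  assumes "mu > 1" "t \<ge> mu"
  shows "(1/t)^(M+1) / (1 - 1/t) \<le> t / (mu^(M+1) * (mu - 1))"
proof -
  have t0: "t > 1" using assms by simp
  have "(1/t)^(M+1) / (1 - 1/t) = 1 / (t^M * (t - 1))"
    using t0 by (simp add: field_simps power_one_over)
  also have "\<dots> \<le> t / (mu^(M+1) * (mu - 1))"
  proof -
    have "mu^(M+1) * (mu - 1) \<le> t^(M+1) * (t - 1)"
      using assms by (intro mult_mono power_mono) auto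
    then show ?thesis using t0 assms
      by (simp add: divide_simps)
  qed
  finally show ?thesis .
qed

lemma cs2:
  fixes w u v :: "'a::finite \<Rightarrow> 'b::finite \<Rightarrow> real"
  assumes "\<And>a b. w a b \<ge> 0"
  shows "(\<Sum>a\<in>UNIV. \<Sum>b\<in>UNIV. w a b * \<bar>u a b\<bar> * \<bar>v a b\<bar>)
     \<le> sqrt (\<Sum>a\<in>UNIV. \<Sum>b\<in>UNIV. w a b * (u a b)^2) * sqrt (\<Sum>a\<in>UNIV. \<Sum>b\<in>UNIV. w a b * (v a b)^2)"
proof -
  define F where "F = (\<lambda>p. sqrt (w (fst p) (snd p)) * u (fst p) (snd p))"
  define G where "G = (\<lambda>p. sqrt (w (fst p) (snd p)) * v (fst p) (snd p))"
  have cp: "(\<Sum>a\<in>UNIV. \<Sum>b\<in>UNIV. h a b) = (\<Sum>p\<in>UNIV. h (fst p) (snd p))" for h :: "'a \<Rightarrow> 'b \<Rightarrow> real"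
    by (simp add: sum.cartesian_product UNIV_Times_UNIV case_prod_beta)
  have "(\<Sum>p\<in>UNIV. \<bar>F p\<bar> * \<bar>G p\<bar>) \<le> L2_set F UNIV * L2_set G UNIV"
    by (rule L2_set_mult_ineq)
  moreover have "\<bar>F p\<bar> * \<bar>G p\<bar> = w (fst p) (snd p) * \<bar>u (fst p) (snd p)\<bar> * \<bar>v (fst p) (snd p)\<bar>" for p
    using assms[of "fst p" "snd p"] unfolding F_def G_def
    by (simp add: abs_mult mult_ac)
  moreover have "(F p)^2 = w (fst p) (snd p) * (u (fst p) (snd p))^2" for p
    using assms[of "fst p" "snd p"] unfolding F_def by (simp add: power_mult_distrib)
  moreover have "(G p)^2 = w (fst p) (snd p) * (v (fst p) (snd p))^2" for p
    using assms[of "fst p" "snd p"] unfolding G_def by (simp add: power_mult_distrib)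
  ultimately show ?thesis
    unfolding cp L2_set_def by simp
qed

lemma scalar_bound:
  fixes s d :: "'a::finite \<Rightarrow> real" and P Q :: "'a \<Rightarrow> 'a \<Rightarrow> complex" and lam :: real and M :: nat
  assumes s: "\<And>a. s a = 1 \<or> s a = -1" and dl: "\<And>a. d a \<ge> lam" and lam: "lam > 1"
    and hP: "\<And>a b. complex_of_real (s a) * P a b = cnj (complex_of_real (s b) * P b a)"
    and hQ: "\<And>a b. complex_of_real (s a) * Q a b = cnj (complex_of_real (s b) * Q b a)"
  defines "e \<equiv> \<lambda>a. complex_of_real (s a / d a)" and "f \<equiv> \<lambda>a. complex_of_real (s a * d a)"
  defines "g \<equiv> \<lambda>k. \<Sum>a\<in>UNIV. \<Sum>b\<in>UNIV. e a ^ (k+M+1) * P a b * e b ^ (k+M+1) * Q b a"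
  shows "summable g \<and> cmod ((1/2) * suminf g)
     \<le> sqrt (Re (\<Sum>a\<in>UNIV. \<Sum>b\<in>UNIV. f a * P a b * f b * P b a))
       * sqrt (Re (\<Sum>a\<in>UNIV. \<Sum>b\<in>UNIV. f a * Q a b * f b * Q b a))
       / (2 * lam^(2*(M+1)) * (lam\<^sup>2 - 1))"
proof -
  define r where "r a b = (s a / d a) * (s b / d b)" for a b
  define t where "t a b = d a * d b" for a b
  define mu where "mu = lam^2"
  have mu1: "mu > 1" using lam unfolding mu_def by (simp add: one_less_power)
  have d0: "d a > 0" for a using dl[of a] lam by simp
  have sa: "\<bar>s a\<bar> = 1" for a using s[of a] by auto
  have s2: "s a * s a = 1" for a using s[of a] by auto
  have tmu: "t a b \<ge> mu" for a b
    unfolding t_def mu_def power2_eq_square using dl[of a] dl[of b] lam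
    by (intro mult_mono) auto
  have t0: "t a b > 0" for a b unfolding t_def using d0 by simp
  have rt: "\<bar>r a b\<bar> = 1 / t a b" for a b
    unfolding r_def t_def using sa d0 by (simp add: abs_mult abs_divide abs_of_pos d0)
  have r1: "\<bar>r a b\<bar> < 1" for a b
    using rt[of a b] tmu[of a b] mu1 by simp
  have g_eq: "g k = (\<Sum>a\<in>UNIV. \<Sum>b\<in>UNIV. complex_of_real (r a b ^ (k+M+1)) * (P a b * Q b a))" for k
  proof -
    have rr: "complex_of_real (r a b ^ n) = e a ^ n * e b ^ n" for a b n
      unfolding r_def e_def by (simp only: power_mult_distrib of_real_mult of_real_power)
    show ?thesis unfolding g_def rr by (intro sum.cong refl) (simp add: mult_ac)
  qed
  define G where "G = (\<Sum>a\<in>UNIV. \<Sum>b\<in>UNIV. (P a b * Q b a) * complex_of_real (r a b^(M+1) / (1 - r a b)))"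
  have gs: "g sums G"
    unfolding g_eq[abs_def] G_def
    by (intro sums_sum geom_pair r1)
  have absQ: "cmod (Q b a) = cmod (Q a b)" for a b
  proof -
    have "cmod (complex_of_real (s a) * Q a b) = cmod (cnj (complex_of_real (s b) * Q b a))"
      using hQ[of a b] by (simp only:)
    then show ?thesis by (simp only: complex_mod_cnj norm_mult norm_of_real sa mult_1_left)
  qed
  define B where "B = 1 / (mu^(M+1) * (mu - 1))"
  have B0: "B \<ge> 0" unfolding B_def using mu1 by simp
  have "cmod G \<le> (\<Sum>a\<in>UNIV. \<Sum>b\<in>UNIV. cmod ((P a b * Q b a) * complex_of_real (r a b^(M+1) / (1 - r a b))))"
    unfolding G_def by (rule order_trans[OF norm_sum sum_mono]) (rule norm_sum)
  also have "\<dots> \<le> (\<Sum>a\<in>UNIV. \<Sum>b\<in>UNIV. B * (t a b * \<bar>cmod (P a b)\<bar> * \<bar>cmod (Q a b)\<bar>))"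
  proof (intro sum_mono)
    fix a b
    have "cmod ((P a b * Q b a) * complex_of_real (r a b^(M+1) / (1 - r a b)))
        \<le> cmod (P a b * Q b a) * (\<bar>r a b\<bar>^(M+1) / (1 - \<bar>r a b\<bar>))"
      by (rule geom_norm[OF r1])
    also have "\<dots> \<le> cmod (P a b * Q b a) * (t a b / (mu^(M+1) * (mu - 1)))"
      unfolding rt by (intro mult_left_mono pair_ineq mu1 tmu) simp
    also have "\<dots> = B * (t a b * \<bar>cmod (P a b)\<bar> * \<bar>cmod (Q a b)\<bar>)"
      unfolding B_def by (simp add: norm_mult absQ)
    finally show "cmod ((P a b * Q b a) * complex_of_real (r a b^(M+1) / (1 - r a b)))
        \<le> B * (t a b * \<bar>cmod (P a b)\<bar> * \<bar>cmod (Q a b)\<bar>)" .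
  qed
  also have "\<dots> = B * (\<Sum>a\<in>UNIV. \<Sum>b\<in>UNIV. t a b * \<bar>cmod (P a b)\<bar> * \<bar>cmod (Q a b)\<bar>)"
    by (simp add: sum_distrib_left)
  also have "\<dots> \<le> B * (sqrt (\<Sum>a\<in>UNIV. \<Sum>b\<in>UNIV. t a b * (cmod (P a b))^2)
                     * sqrt (\<Sum>a\<in>UNIV. \<Sum>b\<in>UNIV. t a b * (cmod (Q a b))^2))"
    by (intro mult_left_mono cs2 B0) (simp add: less_imp_le[OF t0])
  finally have nG: "cmod G \<le> B * (sqrt (\<Sum>a\<in>UNIV. \<Sum>b\<in>UNIV. t a b * (cmod (P a b))^2)
                     * sqrt (\<Sum>a\<in>UNIV. \<Sum>b\<in>UNIV. t a b * (cmod (Q a b))^2))" .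
  have reP: "Re (\<Sum>a\<in>UNIV. \<Sum>b\<in>UNIV. f a * R a b * f b * R b a) = (\<Sum>a\<in>UNIV. \<Sum>b\<in>UNIV. t a b * (cmod (R a b))^2)"
    if hR: "\<And>a b. complex_of_real (s a) * R a b = cnj (complex_of_real (s b) * R b a)" for R
  proof -
    have "f a * R a b * f b * R b a = complex_of_real (t a b) * ((complex_of_real (s a) * R a b) * (complex_of_real (s b) * R b a))" for a b
      unfolding f_def t_def by (simp add: mult_ac)
    also have "\<dots> a b = complex_of_real (t a b) * ((complex_of_real (s a) * R a b) * cnj (complex_of_real (s a) * R a b))" for a b
      by (simp only: hR[of b a])
    also have "\<dots> a b = complex_of_real (t a b * (cmod (R a b))^2)" for a b
      by (simp only: complex_norm_square[symmetric] norm_mult norm_of_real sa mult_1_left of_real_mult)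
    finally show ?thesis by (simp add: Re_sum)
  qed
  have "cmod ((1/2) * suminf g) = cmod G / 2"
    using sums_unique[OF gs] by (simp add: norm_mult)
  also have "\<dots> \<le> B * (sqrt (\<Sum>a\<in>UNIV. \<Sum>b\<in>UNIV. t a b * (cmod (P a b))^2)
                     * sqrt (\<Sum>a\<in>UNIV. \<Sum>b\<in>UNIV. t a b * (cmod (Q a b))^2)) / 2"
    using nG by simp
  also have "\<dots> = sqrt (Re (\<Sum>a\<in>UNIV. \<Sum>b\<in>UNIV. f a * P a b * f b * P b a))
       * sqrt (Re (\<Sum>a\<in>UNIV. \<Sum>b\<in>UNIV. f a * Q a b * f b * Q b a))
       / (2 * lam^(2*(M+1)) * (lam\<^sup>2 - 1))"
    unfolding reP[OF hP] reP[OF hQ] B_def mu_def by (simp add: power_mult algebra_simps power2_eq_square)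
  finally show ?thesis using sums_summable[OF gs] by simp
qed

lemma dg_mult_vec: "(dg f *v w) $ a = f a * w $ a"
proof -
  have "(dg f *v w) $ a = (\<Sum>k\<in>UNIV. if a = k then f a * w $ k else 0)"
    unfolding matrix_vector_mult_def dg_def by (simp add: if_distrib if_distribR cong: if_cong)
  also have "\<dots> = f a * w $ a" by simp
  finally show ?thesis .
qed

lemma mv_scale: "(M::complex^'m^'k) *v (c *s w) = c *s (M *v w)"
  by (simp add: vec_eq_iff matrix_vector_mult_def sum_distrib_left mult_ac)

lemma adj_add: "adj (x + y) = adj x + adj y"
  by (simp add: vec_eq_iff adj_def)

lemma adj_scaleR: "adj (c *\<^sub>R x) = c *\<^sub>R adj (x :: complex^'m^'k)"
  by (simp add: vec_eq_iff adj_def complex_cnj_scaleR)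

lemma adj_bounded_linear: "bounded_linear (adj :: complex^'m::finite^'k::finite \<Rightarrow> _)"
proof -
  have "linear (adj :: complex^'m^'k \<Rightarrow> _)"
    by (rule linearI) (simp_all add: adj_add adj_scaleR)
  then show ?thesis using linear_conv_bounded_linear by blast
qed

lemma herm_deriv:
  fixes \<sigma> :: "real ^ 'p \<Rightarrow> complex^'m::finite^'m"
  assumes "open U" "\<epsilon> \<in> U" "\<And>x. x \<in> U \<Longrightarrow> adj (\<sigma> x) = \<sigma> x" "\<sigma> differentiable (at \<epsilon>)"
  shows "adj (frechet_derivative \<sigma> (at \<epsilon>) h) = frechet_derivative \<sigma> (at \<epsilon>) h"
proof -
  define F where "F = frechet_derivative \<sigma> (at \<epsilon>)"
  have d: "(\<sigma> has_derivative F) (at \<epsilon>)" using assms(4) frechet_derivative_works F_def by blast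
  have "((\<lambda>x. adj (\<sigma> x)) has_derivative (\<lambda>h. adj (F h))) (at \<epsilon>)"
    by (rule bounded_linear.has_derivative[OF adj_bounded_linear d])
  then have "(\<sigma> has_derivative (\<lambda>h. adj (F h))) (at \<epsilon>)"
    by (rule has_derivative_transform_within_open[OF _ assms(1,2)]) (simp add: assms(3))
  then have "F = (\<lambda>h. adj (F h))" using has_derivative_unique d by blast
  then show ?thesis unfolding F_def[symmetric] by metis
qed

lemma trace_conj:
  fixes Tinv T F G X Y :: "complex^'m::finite^'m"
  shows "trace ((Tinv ** F ** T) ** X ** (Tinv ** G ** T) ** Y)
     = trace (F ** (T ** X ** Tinv) ** G ** (T ** Y ** Tinv))"
proof -
  have "trace ((Tinv ** F ** T) ** X ** (Tinv ** G ** T) ** Y)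
     = trace (Tinv ** (F ** T ** X ** Tinv ** G ** T ** Y))"
    by (simp only: matrix_mul_assoc)
  also have "\<dots> = trace ((F ** T ** X ** Tinv ** G ** T ** Y) ** Tinv)"
    by (rule trace_mul_sym)
  also have "\<dots> = trace (F ** (T ** X ** Tinv) ** G ** (T ** Y ** Tinv))"
    by (simp only: matrix_mul_assoc)
  finally show ?thesis .
qed

definition sK :: "'n + 'n \<Rightarrow> real" where
  "sK a = (case a of Inl _ \<Rightarrow> 1 | Inr _ \<Rightarrow> -1)"
definition dL :: "('n \<Rightarrow> real) \<Rightarrow> 'n + 'n \<Rightarrow> real" where
  "dL L a = (case a of Inl k \<Rightarrow> L k | Inr k \<Rightarrow> L k)"

lemma Kmat_dg: "(Kmat :: ('n::finite) cmat) = dg (\<lambda>a. complex_of_real (sK a))"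
  by (simp add: vec_eq_iff Kmat_def dg_def sK_def split: sum.split)

lemma diagLL_dg: "diagLL L = dg (\<lambda>a. complex_of_real (dL L a))"
  by (simp add: vec_eq_iff diagLL_def dg_def dL_def)

lemma sK_sq: "sK a * sK a = 1"
  by (simp add: sK_def split: sum.split)

lemma sK_pm: "sK a = 1 \<or> sK a = -1"
  by (simp add: sK_def split: sum.split)

lemma KK: "(Kmat :: ('n::finite) cmat) ** Kmat = mat 1"
  unfolding Kmat_dg dg_dg mat1_dg by (simp flip: of_real_mult add: sK_sq)

lemma KK': "(Kmat :: ('n::finite) cmat) ** (Kmat ** Z) = Z"
  by (simp add: matrix_mul_assoc KK)

lemma adjK: "adj (Kmat :: ('n::finite) cmat) = Kmat"
  unfolding Kmat_dg adj_dg by simp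

lemma adjD: "adj (diagLL L) = diagLL L"
  unfolding diagLL_dg adj_dg by simp

lemma mpow_conj:
  assumes "Tinv ** T = mat 1"
  shows "mpow (Tinv ** dg e ** T) n = Tinv ** dg (\<lambda>a. e a ^ n) ** (T :: complex^'m::finite^'m)"
proof (induction n)
  case 0
  show ?case using assms by (simp add: mat1_dg[symmetric])
next
  case (Suc n)
  have "mpow (Tinv ** dg e ** T) (Suc n) = Tinv ** dg e ** T ** (Tinv ** dg (\<lambda>a. e a ^ n) ** T)"
    using Suc by simp
  also have "\<dots> = Tinv ** (dg e ** ((T ** Tinv) ** (dg (\<lambda>a. e a ^ n) ** T)))"
    by (simp only: matrix_mul_assoc)
  also have "\<dots> = Tinv ** (dg e ** dg (\<lambda>a. e a ^ n)) ** T"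
  proof -
    have TT: "T ** Tinv = mat 1" using assms matrix_left_right_inverse by blast
    show ?thesis by (simp only: TT matrix_mul_lid matrix_mul_assoc)
  qed
  also have "\<dots> = Tinv ** dg (\<lambda>a. e a ^ Suc n) ** T"
    by (simp add: dg_dg)
  finally show ?case .
qed

theorem mainTheorem5:
  fixes \<sigma> :: "real ^ 'p \<Rightarrow> ('n::finite) cmat"
    and U :: "(real ^ 'p) set" and \<epsilon> :: "real ^ 'p" and i j :: 'p and M :: nat
  assumes "open U" and "\<epsilon> \<in> U"
    and "\<forall>x\<in>U. gaussian_cov (\<sigma> x)"
    and "\<forall>x\<in>U. \<sigma> differentiable (at x)"
    and "min_sympl_eig (\<sigma> \<epsilon>) > 1"
  defines "A \<equiv> Kmat ** \<sigma> \<epsilon>"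
    and "dAi \<equiv> Kmat ** pderiv_i \<sigma> \<epsilon> i"
    and "dAj \<equiv> Kmat ** pderiv_i \<sigma> \<epsilon> j"
    and "lmin \<equiv> min_sympl_eig (\<sigma> \<epsilon>)"
  shows "summable (\<lambda>k. trace (mpow (matrix_inv A) (k + M + 1) ** dAi **
                               mpow (matrix_inv A) (k + M + 1) ** dAj))
    \<and> cmod ((1/2) * (\<Sum>k. trace (mpow (matrix_inv A) (k + M + 1) ** dAi **
                               mpow (matrix_inv A) (k + M + 1) ** dAj)))
      \<le> sqrt (Re (trace ((A ** dAi) ** (A ** dAi)))) * sqrt (Re (trace ((A ** dAj) ** (A ** dAj))))
         / (2 * lmin ^ (2 * (M + 1)) * (lmin\<^sup>2 - 1))"
proof -
  define K :: "'n cmat" where "K = Kmat"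
  have herm: "adj (\<sigma> x) = \<sigma> x" if xU: "x \<in> U" for x
  proof -
    have "gaussian_cov (\<sigma> x)" using assms(3) xU by blast
    then obtain S :: "'n cmat" and L where "\<sigma> x = S ** diagLL L ** adj S"
      unfolding gaussian_cov_def by auto
    then show ?thesis by (simp add: adj_mult adjD matrix_mul_assoc)
  qed
  have dif: "\<sigma> differentiable (at \<epsilon>)" using assms(2,4) by blast
  have hX: "adj (pderiv_i \<sigma> \<epsilon> l) = pderiv_i \<sigma> \<epsilon> l" for l
    unfolding pderiv_i_def by (rule herm_deriv[OF assms(1,2) herm dif])
  obtain S :: "'n cmat" and L where symp: "symplectic_c S" and L1: "\<forall>k. L k \<ge> 1"
    and sig: "\<sigma> \<epsilon> = S ** diagLL L ** adj S"
  proof -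
    have "gaussian_cov (\<sigma> \<epsilon>)" using assms(3,2) by blast
    then show ?thesis using that unfolding gaussian_cov_def by auto
  qed
  have SKS: "S ** K ** adj S = K" using symp unfolding symplectic_c_def K_def by blast
  define Sinv where "Sinv = K ** adj S ** K"
  have SSinv: "S ** Sinv = mat 1"
  proof -
    have "S ** Sinv = (S ** K ** adj S) ** K" unfolding Sinv_def by (simp add: matrix_mul_assoc)
    also have "\<dots> = mat 1" unfolding SKS by (simp add: K_def KK)
    finally show ?thesis .
  qed
  have SinvS: "Sinv ** S = mat 1" using SSinv matrix_left_right_inverse by blast
  define T where "T = adj S"
  define Tinv where "Tinv = adj Sinv"
  have TTinv: "T ** Tinv = mat 1" unfolding T_def Tinv_def
    by (simp add: adj_mult[symmetric] SinvS adj_mat1)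
  have TinvT: "Tinv ** T = mat 1" unfolding T_def Tinv_def
    by (simp add: adj_mult[symmetric] SSinv adj_mat1)
  have Tinv_eq: "Tinv = K ** S ** K"
    unfolding Tinv_def Sinv_def by (simp add: adj_mult adjK K_def matrix_mul_assoc)
  define f where "f a = complex_of_real (sK a * dL L a)" for a
  define e where "e a = complex_of_real (sK a / dL L a)" for a
  have dpos: "dL L a > 0" for a using L1 by (simp add: dL_def split: sum.split) (meson less_le_trans zero_less_one)+
  have KD: "K ** diagLL L = dg f"
    unfolding K_def Kmat_dg diagLL_dg dg_dg f_def by simp
  have fe: "dg f ** dg e = mat 1"
    unfolding dg_dg mat1_dg f_def e_def
  proof -
    have one: "sK a * dL L a * (sK a / dL L a) = 1" for a
      using dpos[of a] sK_sq[of a] by (simp add: field_simps)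
    then show "dg (\<lambda>a. complex_of_real (sK a * dL L a) * complex_of_real (sK a / dL L a)) = dg (\<lambda>_. 1)"
      by (simp only: of_real_mult[symmetric] one of_real_1)
  qed
  have Aeq: "A = Tinv ** dg f ** T"
  proof -
    have "Tinv ** dg f ** T = K ** (S ** (K ** (K ** (diagLL L ** adj S))))"
      unfolding Tinv_eq T_def KD[symmetric] by (simp only: matrix_mul_assoc)
    also have "\<dots> = K ** (S ** (diagLL L ** adj S))" unfolding K_def by (simp only: KK')
    also have "\<dots> = A" unfolding A_def sig K_def by (simp only: matrix_mul_assoc)
    finally show ?thesis by simp
  qed
  have invA: "matrix_inv A = Tinv ** dg e ** T"
  proof (rule matrix_inv_eq)
    have "A ** (Tinv ** dg e ** T) = Tinv ** ((dg f ** ((T ** Tinv) ** dg e)) ** T)"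
      unfolding Aeq by (simp only: matrix_mul_assoc)
    also have "\<dots> = mat 1" by (simp add: TTinv fe TinvT)
    finally show "A ** (Tinv ** dg e ** T) = mat 1" .
  qed
  have Keq: "Kmat ** \<sigma> \<epsilon> = Tinv ** dg f ** T" using Aeq A_def by simp
  have fin: "finite (sympl_eigs (\<sigma> \<epsilon>))"
  proof (rule finite_subset[of _ "range (\<lambda>a. sK a * dL L a)"])
    show "sympl_eigs (\<sigma> \<epsilon>) \<subseteq> range (\<lambda>a. sK a * dL L a)"
    proof
      fix l assume "l \<in> sympl_eigs (\<sigma> \<epsilon>)"
      then obtain v where v0: "v \<noteq> 0" and ev: "(Kmat ** \<sigma> \<epsilon>) *v v = complex_of_real l *s v"
        unfolding sympl_eigs_def by blast
      define w where "w = T *v v"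
      have "Tinv *v w = v" unfolding w_def by (simp add: matrix_vector_mul_assoc TinvT)
      then have "w \<noteq> 0" using v0 by auto
      then obtain a where wa: "w $ a \<noteq> 0" by (auto simp: vec_eq_iff)
      have "dg f *v w = T *v ((Kmat ** \<sigma> \<epsilon>) *v v)"
        unfolding Keq w_def by (simp add: matrix_vector_mul_assoc matrix_mul_assoc TTinv)
      also have "\<dots> = complex_of_real l *s w" unfolding ev w_def by (rule mv_scale)
      finally have "(dg f *v w) $ a = (complex_of_real l *s w) $ a" by simp
      then have "f a * w $ a = complex_of_real l * w $ a" by (simp add: dg_mult_vec)
      then have "f a = complex_of_real l" using wa by simp
      then have "l = sK a * dL L a" unfolding f_def by (simp only: of_real_eq_iff)
      then show "l \<in> range (\<lambda>a. sK a * dL L a)" by blast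
    qed
  qed simp
  have Lin: "L k \<in> sympl_eigs (\<sigma> \<epsilon>)" for k
  proof -
    define x :: "complex^('n+'n)" where "x = axis (Inl k) 1"
    define v where "v = Tinv *v x"
    have fx: "dg f *v x = complex_of_real (L k) *s x"
      unfolding x_def by (simp add: vec_eq_iff dg_mult_vec axis_def f_def sK_def dL_def)
    have TTx: "T *v (Tinv *v x) = x" by (simp add: matrix_vector_mul_assoc TTinv)
    have "(Kmat ** \<sigma> \<epsilon>) *v v = Tinv *v (dg f *v (T *v (Tinv *v x)))"
      unfolding Keq v_def by (simp add: matrix_vector_mul_assoc matrix_mul_assoc)
    also have "\<dots> = Tinv *v (dg f *v x)" unfolding TTx ..
    also have "\<dots> = complex_of_real (L k) *s v" unfolding fx v_def by (rule mv_scale)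
    finally have ev: "(Kmat ** \<sigma> \<epsilon>) *v v = complex_of_real (L k) *s v" .
    have "T *v v = x" unfolding v_def by (simp add: matrix_vector_mul_assoc TTinv)
    moreover have "x \<noteq> 0" unfolding x_def by (simp add: axis_eq_0_iff)
    ultimately have "v \<noteq> 0" by auto
    moreover have "L k > 0" using L1 by (meson less_le_trans zero_less_one)
    ultimately show ?thesis unfolding sympl_eigs_def using ev by blast
  qed
  have lle: "lmin \<le> dL L a" for a
    unfolding lmin_def min_sympl_eig_def dL_def
    by (cases a) (simp_all add: Min_le[OF fin Lin])
  define Pm where "Pm l = T ** (Kmat ** pderiv_i \<sigma> \<epsilon> l) ** Tinv" for l
  have hP: "complex_of_real (sK a) * Pm l $ a $ b = cnj (complex_of_real (sK b) * Pm l $ b $ a)" for l a b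
  proof -
    define X where "X = pderiv_i \<sigma> \<epsilon> l"
    define Y where "Y = Kmat ** Pm l"
    have Yeq: "Y = Sinv ** X ** adj Sinv"
      unfolding Y_def Pm_def X_def Tinv_def T_def Sinv_def K_def
      by (simp only: matrix_mul_assoc)
    have aY: "adj Y = Y" unfolding Yeq
      by (simp add: adj_mult matrix_mul_assoc X_def hX)
    have Yab: "Y $ a' $ b' = complex_of_real (sK a') * Pm l $ a' $ b'" for a' b'
      unfolding Y_def Kmat_dg by (rule dg_mult_left)
    have "Y $ a $ b = adj Y $ a $ b" using aY by simp
    then show ?thesis unfolding Yab by (simp add: adj_def Yab)
  qed
  have tr_eq: "trace ((Tinv ** F ** T) ** Z1 ** (Tinv ** F ** T) ** Z2)
     = (\<Sum>a\<in>UNIV. \<Sum>b\<in>UNIV. h a * (T ** Z1 ** Tinv) $ a $ b * h b * (T ** Z2 ** Tinv) $ b $ a)"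
    if "F = dg h" for F h Z1 Z2
    unfolding trace_conj that by (rule trace_dg)
  have lhs: "trace (mpow (matrix_inv A) (k + M + 1) ** dAi ** mpow (matrix_inv A) (k + M + 1) ** dAj)
      = (\<Sum>a\<in>UNIV. \<Sum>b\<in>UNIV. e a ^ (k+M+1) * Pm i $ a $ b * e b ^ (k+M+1) * Pm j $ b $ a)" for k
    unfolding invA mpow_conj[OF TinvT] Pm_def dAi_def dAj_def
    by (rule tr_eq) simp
  have rhs: "trace ((A ** dAl) ** (A ** dAl))
      = (\<Sum>a\<in>UNIV. \<Sum>b\<in>UNIV. f a * Pm l $ a $ b * f b * Pm l $ b $ a)"
    if "dAl = Kmat ** pderiv_i \<sigma> \<epsilon> l" for l dAl
  proof -
    have "trace ((A ** dAl) ** (A ** dAl)) = trace ((Tinv ** dg f ** T) ** dAl ** (Tinv ** dg f ** T) ** dAl)"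
      unfolding Aeq by (simp only: matrix_mul_assoc)
    also have "\<dots> = (\<Sum>a\<in>UNIV. \<Sum>b\<in>UNIV. f a * Pm l $ a $ b * f b * Pm l $ b $ a)"
      unfolding Pm_def that by (rule tr_eq) simp
    finally show ?thesis .
  qed
  have lam1: "lmin > 1" using assms(5) lmin_def by simp
  have main: "summable (\<lambda>k. \<Sum>a\<in>UNIV. \<Sum>b\<in>UNIV. e a ^ (k+M+1) * Pm i $ a $ b * e b ^ (k+M+1) * Pm j $ b $ a)
    \<and> cmod ((1/2) * (\<Sum>k. \<Sum>a\<in>UNIV. \<Sum>b\<in>UNIV. e a ^ (k+M+1) * Pm i $ a $ b * e b ^ (k+M+1) * Pm j $ b $ a))
     \<le> sqrt (Re (\<Sum>a\<in>UNIV. \<Sum>b\<in>UNIV. f a * Pm i $ a $ b * f b * Pm i $ b $ a))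
       * sqrt (Re (\<Sum>a\<in>UNIV. \<Sum>b\<in>UNIV. f a * Pm j $ a $ b * f b * Pm j $ b $ a))
       / (2 * lmin^(2*(M+1)) * (lmin\<^sup>2 - 1))"
    unfolding e_def f_def
    by (rule scalar_bound[where s=sK and d="dL L" and lam=lmin and P="\<lambda>a b. Pm i $ a $ b" and Q="\<lambda>a b. Pm j $ a $ b" and M=M])
       (rule sK_pm lle lam1 hP)+
  show ?thesis
    unfolding lhs rhs[OF meta_eq_to_obj_eq[OF dAi_def]] rhs[OF meta_eq_to_obj_eq[OF dAj_def]] by (rule main)
qed

end
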